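(* Let $(\Omega,\mathcal{F})$ be a measurable space, $\mathrm{B}_b$ the space of bounded real-valued measurable functions on $\Omega$, and $C\subset\mathrm{B}_b$ with $0\in C$ and $X+m\in C$ for all $X\in C$, $m\in\mathbb{R}$. Let $H\colon C\to\mathbb{R}$ be a premium principle and define $$R_{\mathrm{Max}}(X):=\inf\{H(X_0)\mid X_0\in C,\ X_0\ge X\},\quad X\in\mathrm{B}_b.$$ Then $R_{\mathrm{Max}}\colon\mathrm{B}_b\to\mathbb{R}$ is a risk measure with $R_{\mathrm{Max}}(X)\le H(X)$ for all $X\in C$; moreover $D_{\mathrm{Min}}(X):=H(X)-R_{\mathrm{Max}}(X)$ defines a deviation measure on $C$, and $H(X)=R_{\mathrm{Max}}(X)+D_{\mathrm{Min}}(X)$ for all $X\in C$. For every other decomposition $H(X)=R(X)+D(X)$, $X\in C$, with a risk measure $R\colon\mathrm{B}_b\to\mathbb{R}$ and a deviation measure $D\colon C\to\mathbb{R}$, one has $R\le R_{\mathrm{Max}}$ (on $\mathrm{B}_b$) and $D\ge D_{\mathrm{Min}}$ (on $C$).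
   Context: Constants are identified with constant functions; $\le$ is the pointwise order. A premium principle is a map $H\colon C\to\mathbb{R}$ with (P1) $H(X+m)=H(X)+m$ for $X\in C$, $m\in\mathbb{R}$, and (P2) $H(0)=0$ and $H(X)\ge0$ for $X\in C$ with $X\ge0$. A risk measure is a map $R\colon\mathrm{B}_b\to\mathbb{R}$ with $R(X+m)=R(X)+m$ for $X\in\mathrm{B}_b$, $m\in\mathbb{R}$, $R(0)=0$, and $R(X)\le R(Y)$ whenever $X\le Y$. A deviation measure is a map $D\colon C\to\mathbb{R}$ with $D(X+m)=D(X)$ for $X\in C$, $m\in\mathbb{R}$, $D(0)=0$, and $D\ge0$ on $C$. *)

theory Defs
  imports "HOL-Analysis.Analysis"
begin

definition Bb :: "'a measure \<Rightarrow> ('a \<Rightarrow> real) set" where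
  "Bb M = {X. X \<in> borel_measurable M \<and> (\<exists>B. \<forall>\<omega>\<in>space M. \<bar>X \<omega>\<bar> \<le> B)}"

definition fle :: "'a measure \<Rightarrow> ('a \<Rightarrow> real) \<Rightarrow> ('a \<Rightarrow> real) \<Rightarrow> bool" where
  "fle M X Y \<longleftrightarrow> (\<forall>\<omega>\<in>space M. X \<omega> \<le> Y \<omega>)"

definition premium_principle ::
  "'a measure \<Rightarrow> ('a \<Rightarrow> real) set \<Rightarrow> (('a \<Rightarrow> real) \<Rightarrow> real) \<Rightarrow> bool" where
  "premium_principle M C H \<longleftrightarrow>
     (\<forall>X\<in>C. \<forall>m. H (\<lambda>\<omega>. X \<omega> + m) = H X + m) \<and>
     H (\<lambda>_. 0) = 0 \<and>
     (\<forall>X\<in>C. fle M (\<lambda>_. 0) X \<longrightarrow> H X \<ge> 0)"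

definition risk_measure :: "'a measure \<Rightarrow> (('a \<Rightarrow> real) \<Rightarrow> real) \<Rightarrow> bool" where
  "risk_measure M R \<longleftrightarrow>
     (\<forall>X\<in>Bb M. \<forall>m. R (\<lambda>\<omega>. X \<omega> + m) = R X + m) \<and>
     R (\<lambda>_. 0) = 0 \<and>
     (\<forall>X\<in>Bb M. \<forall>Y\<in>Bb M. fle M X Y \<longrightarrow> R X \<le> R Y)"

definition deviation_measure ::
  "'a measure \<Rightarrow> ('a \<Rightarrow> real) set \<Rightarrow> (('a \<Rightarrow> real) \<Rightarrow> real) \<Rightarrow> bool" where
  "deviation_measure M C D \<longleftrightarrow>
     (\<forall>X\<in>C. \<forall>m. D (\<lambda>\<omega>. X \<omega> + m) = D X) \<and>
     D (\<lambda>_. 0) = 0 \<and>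
     (\<forall>X\<in>C. D X \<ge> 0)"

definition R_Max ::
  "'a measure \<Rightarrow> ('a \<Rightarrow> real) set \<Rightarrow> (('a \<Rightarrow> real) \<Rightarrow> real) \<Rightarrow> ('a \<Rightarrow> real) \<Rightarrow> real" where
  "R_Max M C H X = Inf {H X0 | X0. X0 \<in> C \<and> fle M X X0}"

definition D_Min ::
  "'a measure \<Rightarrow> ('a \<Rightarrow> real) set \<Rightarrow> (('a \<Rightarrow> real) \<Rightarrow> real) \<Rightarrow> ('a \<Rightarrow> real) \<Rightarrow> real" where
  "D_Min M C H X = H X - R_Max M C H X"

end

theory Submission
  imports Defs
begin

lemma Bb_shift:
  assumes "X \<in> Bb M" shows "(\<lambda>\<omega>. X \<omega> + m) \<in> Bb M"
proof -
  from assms obtain B where B: "\<forall>\<omega>\<in>space M. \<bar>X \<omega>\<bar> \<le> B" and ms: "X \<in> borel_measurable M"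
    unfolding Bb_def by auto
  have "\<forall>\<omega>\<in>space M. \<bar>X \<omega> + m\<bar> \<le> B + \<bar>m\<bar>" using B by (smt (verit))
  moreover have "(\<lambda>\<omega>. X \<omega> + m) \<in> borel_measurable M" using ms by measurable
  ultimately show ?thesis unfolding Bb_def by blast
qed

theorem theorem2p3:
  fixes M :: "'a measure" and C :: "('a \<Rightarrow> real) set" and H :: "('a \<Rightarrow> real) \<Rightarrow> real"
  assumes "C \<subseteq> Bb M"
    and "(\<lambda>_. 0) \<in> C"
    and "\<And>X m. X \<in> C \<Longrightarrow> (\<lambda>\<omega>. X \<omega> + m) \<in> C"
    and "premium_principle M C H"
  shows "risk_measure M (R_Max M C H)
    \<and> (\<forall>X\<in>C. R_Max M C H X \<le> H X)
    \<and> deviation_measure M C (D_Min M C H)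
    \<and> (\<forall>X\<in>C. H X = R_Max M C H X + D_Min M C H X)
    \<and> (\<forall>R D. risk_measure M R \<and> deviation_measure M C D
           \<and> (\<forall>X\<in>C. H X = R X + D X)
         \<longrightarrow> (\<forall>X\<in>Bb M. R X \<le> R_Max M C H X) \<and> (\<forall>X\<in>C. D_Min M C H X \<le> D X))"
proof -
  define S where "S X = {H X0 | X0. X0 \<in> C \<and> fle M X X0}" for X
  have RS: "R_Max M C H X = Inf (S X)" for X unfolding R_Max_def S_def by simp
  have Hsh: "\<And>X m. X \<in> C \<Longrightarrow> H (\<lambda>\<omega>. X \<omega> + m) = H X + m"
   and H0: "H (\<lambda>_. 0) = 0" and Hpos: "\<And>X. X \<in> C \<Longrightarrow> fle M (\<lambda>_. 0) X \<Longrightarrow> H X \<ge> 0"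
    using assms(4) unfolding premium_principle_def by auto
  have const: "(\<lambda>_. c) \<in> C" for c using assms(3)[OF assms(2), of c] by simp
  have lower: "s \<ge> -B" if "s \<in> S X" "\<forall>\<omega>\<in>space M. \<bar>X \<omega>\<bar> \<le> B" for s X B
  proof -
    from that obtain X0 where X0: "X0 \<in> C" "fle M X X0" "s = H X0" unfolding S_def by auto
    have "fle M (\<lambda>_. 0) (\<lambda>\<omega>. X0 \<omega> + B)" using X0(2) that(2) unfolding fle_def by force
    then have "H (\<lambda>\<omega>. X0 \<omega> + B) \<ge> 0" using Hpos[OF assms(3)[OF X0(1)]] by blast
    then show ?thesis using Hsh[OF X0(1)] X0(3) by simp
  qed
  have ne: "S X \<noteq> {}" if "X \<in> Bb M" for X
  proof -
    from that obtain B where B: "\<forall>\<omega>\<in>space M. \<bar>X \<omega>\<bar> \<le> B" unfolding Bb_def by auto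
    have "fle M X (\<lambda>_. B)" using B unfolding fle_def by force
    then have "H (\<lambda>_. B) \<in> S X" using const unfolding S_def by blast
    then show ?thesis by blast
  qed
  have bdd: "bdd_below (S X)" if "X \<in> Bb M" for X
  proof -
    from that obtain B where B: "\<forall>\<omega>\<in>space M. \<bar>X \<omega>\<bar> \<le> B" unfolding Bb_def by auto
    show ?thesis unfolding bdd_below_def using lower[OF _ B] by blast
  qed
  have lowR: "Inf (S X) \<ge> -B" if "X \<in> Bb M" "\<forall>\<omega>\<in>space M. \<bar>X \<omega>\<bar> \<le> B" for X B
    using cInf_greatest[OF ne[OF that(1)]] lower[OF _ that(2)] by blast
  have shle: "Inf (S (\<lambda>\<omega>. X \<omega> + m)) \<le> Inf (S X) + m" if X: "X \<in> Bb M" for X m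
  proof -
    have "Inf (S (\<lambda>\<omega>. X \<omega> + m)) - m \<le> s" if s: "s \<in> S X" for s
    proof -
      from s obtain X0 where X0: "X0 \<in> C" "fle M X X0" "s = H X0" unfolding S_def by auto
      have "fle M (\<lambda>\<omega>. X \<omega> + m) (\<lambda>\<omega>. X0 \<omega> + m)" using X0(2) unfolding fle_def by auto
      then have "H X0 + m \<in> S (\<lambda>\<omega>. X \<omega> + m)" using assms(3)[OF X0(1)] Hsh[OF X0(1)]
        unfolding S_def by (metis (mono_tags, lifting) mem_Collect_eq)
      then have "Inf (S (\<lambda>\<omega>. X \<omega> + m)) \<le> H X0 + m"
        using cInf_lower[OF _ bdd[OF Bb_shift[OF X]]] by blast
      then show ?thesis using X0 by simp
    qed
    then have "Inf (S (\<lambda>\<omega>. X \<omega> + m)) - m \<le> Inf (S X)"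
      using cInf_greatest[OF ne[OF X]] by blast
    then show ?thesis by simp
  qed
  have shift: "Inf (S (\<lambda>\<omega>. X \<omega> + m)) = Inf (S X) + m" if X: "X \<in> Bb M" for X m
  proof -
    have "Inf (S (\<lambda>\<omega>. (X \<omega> + m) + - m)) \<le> Inf (S (\<lambda>\<omega>. X \<omega> + m)) + - m"
      using shle[OF Bb_shift[OF X]] .
    then show ?thesis using shle[OF X, of m] by simp
  qed
  have zeroBb: "(\<lambda>_. 0) \<in> Bb M" using assms(1,2) by blast
  have R0: "Inf (S (\<lambda>_. 0)) = 0"
  proof -
    have "H (\<lambda>_. 0) \<in> S (\<lambda>_. 0)" unfolding S_def fle_def using assms(2) by blast
    then have "Inf (S (\<lambda>_. 0)) \<le> H (\<lambda>_. 0)" using cInf_lower[OF _ bdd[OF zeroBb]] by blast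
    then have "Inf (S (\<lambda>_. 0)) \<le> 0" using H0 by simp
    moreover have "Inf (S (\<lambda>_. 0)) \<ge> -0" using lowR[OF zeroBb, of 0] by simp
    ultimately show ?thesis by simp
  qed
  have mono: "Inf (S X) \<le> Inf (S Y)" if "X \<in> Bb M" "Y \<in> Bb M" "fle M X Y" for X Y
  proof -
    have "S Y \<subseteq> S X" using that(3) unfolding S_def fle_def by force
    then show ?thesis using cInf_superset_mono ne[OF that(2)] bdd[OF that(1)] by blast
  qed
  have RH: "Inf (S X) \<le> H X" if "X \<in> C" for X
  proof -
    have "H X \<in> S X" unfolding S_def fle_def using that by blast
    moreover have "X \<in> Bb M" using that assms(1) by blast
    ultimately show ?thesis using cInf_lower[OF _ bdd] by blast
  qed
  have risk: "risk_measure M (R_Max M C H)"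
    unfolding risk_measure_def RS using shift R0 mono by blast
  have dev: "deviation_measure M C (D_Min M C H)"
    unfolding deviation_measure_def D_Min_def RS
  proof (intro conjI ballI allI)
    fix X m assume X: "X \<in> C"
    then have "X \<in> Bb M" using assms(1) by blast
    then show "H (\<lambda>\<omega>. X \<omega> + m) - Inf (S (\<lambda>\<omega>. X \<omega> + m)) = H X - Inf (S X)"
      using shift Hsh[OF X] by simp
  next
    show "H (\<lambda>_. 0) - Inf (S (\<lambda>_. 0)) = 0" using H0 R0 by simp
  next
    fix X assume "X \<in> C" then show "0 \<le> H X - Inf (S X)" using RH by simp
  qed
  have minimal: "(\<forall>X\<in>Bb M. R X \<le> R_Max M C H X) \<and> (\<forall>X\<in>C. D_Min M C H X \<le> D X)"
    if "risk_measure M R" "deviation_measure M C D" "\<forall>X\<in>C. H X = R X + D X" for R D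
  proof -
    have A: "R X \<le> R_Max M C H X" if X: "X \<in> Bb M" for X
    proof -
      have "R X \<le> s" if s: "s \<in> S X" for s
      proof -
        from s obtain X0 where X0: "X0 \<in> C" "fle M X X0" "s = H X0" unfolding S_def by auto
        have "X0 \<in> Bb M" using X0(1) assms(1) by blast
        then have "R X \<le> R X0" using \<open>risk_measure M R\<close> X X0(2) unfolding risk_measure_def by blast
        moreover have "D X0 \<ge> 0" using \<open>deviation_measure M C D\<close> X0 unfolding deviation_measure_def by blast
        ultimately show ?thesis using X0 \<open>\<forall>X\<in>C. H X = R X + D X\<close> by force
      qed
      then show ?thesis unfolding RS using cInf_greatest[OF ne[OF X]] by blast
    qed
    have "D_Min M C H X \<le> D X" if X: "X \<in> C" for X
    proof -
      have "R X \<le> R_Max M C H X" using A X assms(1) by blast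
      then show ?thesis using X \<open>\<forall>X\<in>C. H X = R X + D X\<close> unfolding D_Min_def by force
    qed
    then show ?thesis using A by blast
  qed
  show ?thesis
  proof (intro conjI)
    show "\<forall>X\<in>C. R_Max M C H X \<le> H X" using RH RS by simp
    show "\<forall>X\<in>C. H X = R_Max M C H X + D_Min M C H X" unfolding D_Min_def by simp
    show "\<forall>R D. risk_measure M R \<and> deviation_measure M C D \<and> (\<forall>X\<in>C. H X = R X + D X)
         \<longrightarrow> (\<forall>X\<in>Bb M. R X \<le> R_Max M C H X) \<and> (\<forall>X\<in>C. D_Min M C H X \<le> D X)"
      using minimal by blast
  qed (rule risk, rule dev)
qed

end
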